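(* Let $1<p<\infty$ and $\eta(y)=y/(1-y)$ for $y\in(0,1)$. (a) If $a\in SO(\mathbb{R}_+)$, then $a\circ\eta\in SO(\mathbb{I})$. (b) If $\alpha\in SOS(\mathbb{R}_+)$, then $\widetilde\alpha:=\eta^{-1}\circ\alpha\circ\eta\in SOS(\mathbb{I})$, the function $c_{\alpha,p}(y):=\big(\frac{1-\widetilde\alpha(y)}{1-y}\big)^{2/p}$, $y\in\mathbb{I}$, belongs to $SO(\mathbb{I})$, and \[ 0<\inf_{y\in\mathbb{I}}c_{\alpha,p}(y)\le\sup_{y\in\mathbb{I}}c_{\alpha,p}(y)<+\infty. \]
   Context: $\mathbb{R}_+=(0,\infty)$, $\mathbb{I}=(0,1)$; $\eta^{-1}(t)=t/(1+t)$. $C_b(X)$: bounded continuous complex functions on $X$. $\operatorname{osc}(f,[\lambda r,r]):=\sup\{|f(t)-f(\tau)|:t,\tau\in[\lambda r,r]\}$. $SO(\mathbb{R}_+)$: $f\in C_b(\mathbb{R}_+)$ with $\lim_{r\to s}\operatorname{osc}(f,[\lambda r,r])=0$ for $s\in\{0,\infty\}$ and each (equivalently some) $\lambda\in(0,1)$. $SO(\mathbb{I})$: $\varphi\in C_b(\mathbb{I})$ such that $\lim_{r\to0}\operatorname{osc}(\varphi,[\lambda r,r])=0$ and $\lim_{r\to0}\operatorname{osc}(\varphi(1-\cdot),[\lambda r,r])=0$ for each (equivalently some) $\lambda\in(0,1)$. $SOS(\mathbb{R}_+)$: orientation-preserving diffeomorphisms $\alpha$ of $\mathbb{R}_+$ onto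 itself with no fixed points in $\mathbb{R}_+$, $\log\alpha'\in C_b(\mathbb{R}_+)$, $\alpha'\in SO(\mathbb{R}_+)$. $SOS(\mathbb{I})$: orientation-preserving diffeomorphisms of $\mathbb{I}$ onto itself with no fixed points in $\mathbb{I}$ (only fixed points $0,1$), with $\log\alpha'\in C_b(\mathbb{I})$ and $\alpha'\in SO(\mathbb{I})$. *)

theory Defs
  imports "HOL-Analysis.Analysis"
begin

definition osc :: "(real \<Rightarrow> complex) \<Rightarrow> real set \<Rightarrow> real" where
  "osc f S = Sup {norm (f t - f \<tau>) | t \<tau>. t \<in> S \<and> \<tau> \<in> S}"

definition Cb :: "real set \<Rightarrow> (real \<Rightarrow> complex) \<Rightarrow> bool" where
  "Cb X f \<longleftrightarrow> continuous_on X f \<and> bounded (f ` X)"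

definition Rp :: "real set" where "Rp = {0<..}"
definition II :: "real set" where "II = {0<..<1}"

definition SO_Rp :: "(real \<Rightarrow> complex) \<Rightarrow> bool" where
  "SO_Rp f \<longleftrightarrow> Cb Rp f \<and>
     (\<forall>l\<in>{0<..<1::real}.
        ((\<lambda>r. osc f {l*r..r}) \<longlongrightarrow> 0) (at_right 0) \<and>
        ((\<lambda>r. osc f {l*r..r}) \<longlongrightarrow> 0) at_top)"

definition SO_I :: "(real \<Rightarrow> complex) \<Rightarrow> bool" where
  "SO_I \<phi> \<longleftrightarrow> Cb II \<phi> \<and>
     (\<forall>l\<in>{0<..<1::real}.
        ((\<lambda>r. osc \<phi> {l*r..r}) \<longlongrightarrow> 0) (at_right 0) \<and>
        ((\<lambda>r. osc (\<lambda>t. \<phi> (1 - t)) {l*r..r}) \<longlongrightarrow> 0) (at_right 0))"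

definition op_diffeo_on :: "real set \<Rightarrow> (real \<Rightarrow> real) \<Rightarrow> bool" where
  "op_diffeo_on S \<alpha> \<longleftrightarrow> bij_betw \<alpha> S S \<and> strict_mono_on S \<alpha> \<and>
     (\<forall>x\<in>S. \<alpha> differentiable (at x)) \<and> continuous_on S (deriv \<alpha>) \<and>
     (\<forall>y\<in>S. inv_into S \<alpha> differentiable (at y)) \<and>
     continuous_on S (deriv (inv_into S \<alpha>))"

definition SOS_Rp :: "(real \<Rightarrow> real) \<Rightarrow> bool" where
  "SOS_Rp \<alpha> \<longleftrightarrow> op_diffeo_on Rp \<alpha> \<and> (\<forall>x\<in>Rp. \<alpha> x \<noteq> x) \<and>
     Cb Rp (\<lambda>x. complex_of_real (ln (deriv \<alpha> x))) \<and>
     SO_Rp (\<lambda>x. complex_of_real (deriv \<alpha> x))"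

definition SOS_I :: "(real \<Rightarrow> real) \<Rightarrow> bool" where
  "SOS_I \<alpha> \<longleftrightarrow> op_diffeo_on II \<alpha> \<and> (\<forall>x\<in>II. \<alpha> x \<noteq> x) \<and>
     Cb II (\<lambda>x. complex_of_real (ln (deriv \<alpha> x))) \<and>
     SO_I (\<lambda>x. complex_of_real (deriv \<alpha> x))"

definition eta :: "real \<Rightarrow> real" where "eta y = y / (1 - y)"
definition eta_inv :: "real \<Rightarrow> real" where "eta_inv t = t / (1 + t)"

end

theory Submission
  imports Defs
begin


definition oscsmall :: "(real \<Rightarrow> complex) \<Rightarrow> real \<Rightarrow> real filter \<Rightarrow> bool" where
  "oscsmall f l F \<longleftrightarrow> (\<forall>e>0. eventually (\<lambda>r. \<forall>t\<in>{l*r..r}. \<forall>\<tau>\<in>{l*r..r}. norm (f t - f \<tau>) \<le> e) F)"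

lemma osc_upper:
  assumes "bdd_above {norm (f t - f \<tau>) | t \<tau>. t \<in> S \<and> \<tau> \<in> S}" "t \<in> S" "\<tau> \<in> S"
  shows "norm (f t - f \<tau>) \<le> osc f S"
  unfolding osc_def by (rule cSup_upper) (use assms in auto)

lemma osc_least:
  assumes "S \<noteq> {}" "\<And>t \<tau>. t \<in> S \<Longrightarrow> \<tau> \<in> S \<Longrightarrow> norm (f t - f \<tau>) \<le> e"
  shows "osc f S \<le> e"
  unfolding osc_def by (rule cSup_least) (use assms in fastforce)+

lemma osc_nonneg:
  assumes "bdd_above {norm (f t - f \<tau>) | t \<tau>. t \<in> S \<and> \<tau> \<in> S}" "S \<noteq> {}"
  shows "0 \<le> osc f S"
proof -
  obtain t where "t \<in> S" using assms by auto
  then have "norm (f t - f t) \<le> osc f S" using osc_upper[OF assms(1)] by blast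
  then show ?thesis by simp
qed

lemma bdd_osc:
  assumes "bounded (f ` T)" "S \<subseteq> T"
  shows "bdd_above {norm (f t - f \<tau>) | t \<tau>. t \<in> S \<and> \<tau> \<in> S}"
proof -
  obtain B where B: "\<And>x. x \<in> T \<Longrightarrow> norm (f x) \<le> B"
    using assms(1) by (auto simp: bounded_iff)
  show ?thesis
  proof (rule bdd_aboveI[where M="2*B"], clarify)
    fix t \<tau> assume "t \<in> S" "\<tau> \<in> S"
    then have "norm (f t) \<le> B" "norm (f \<tau>) \<le> B" using B assms(2) by auto
    then show "norm (f t - f \<tau>) \<le> 2*B" using norm_triangle_ineq4[of "f t" "f \<tau>"] by linarith
  qed
qed

lemma osc_cong: "(\<And>t. t \<in> S \<Longrightarrow> f t = g t) \<Longrightarrow> osc f S = osc g S"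
  unfolding osc_def by (metis (no_types, lifting))

lemma tendsto_osc_iff:
  assumes bd: "bounded (f ` S)" and ev: "eventually (\<lambda>r. l*r \<le> r \<and> {l*r..r} \<subseteq> S) F"
  shows "((\<lambda>r. osc f {l*r..r}) \<longlongrightarrow> 0) F \<longleftrightarrow> oscsmall f l F"
proof
  assume T: "((\<lambda>r. osc f {l*r..r}) \<longlongrightarrow> 0) F"
  show "oscsmall f l F" unfolding oscsmall_def
  proof (intro allI impI)
    fix e :: real assume "e > 0"
    from order_tendstoD(2)[OF T this] have "eventually (\<lambda>r. osc f {l*r..r} < e) F" .
    then show "eventually (\<lambda>r. \<forall>t\<in>{l*r..r}. \<forall>\<tau>\<in>{l*r..r}. norm (f t - f \<tau>) \<le> e) F"
      using ev
    proof eventually_elim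
      case (elim r)
      then show ?case using osc_upper[OF bdd_osc[OF bd], of "{l*r..r}" _ _] by (meson less_le order_trans)
    qed
  qed
next
  assume O: "oscsmall f l F"
  show "((\<lambda>r. osc f {l*r..r}) \<longlongrightarrow> 0) F"
  proof (rule tendstoI)
    fix e :: real assume "e > 0"
    then have "e/2 > 0" by simp
    with O have "eventually (\<lambda>r. \<forall>t\<in>{l*r..r}. \<forall>\<tau>\<in>{l*r..r}. norm (f t - f \<tau>) \<le> e/2) F"
      unfolding oscsmall_def by blast
    then show "eventually (\<lambda>r. dist (osc f {l*r..r}) 0 < e) F"
      using ev
    proof eventually_elim
      case (elim r)
      then have ne: "{l*r..r} \<noteq> {}" by auto
      have "osc f {l*r..r} \<le> e/2" using osc_least[OF ne] elim by blast
      moreover have "0 \<le> osc f {l*r..r}" using osc_nonneg[OF bdd_osc[OF bd] ne] elim by blast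
      ultimately show ?case using \<open>e > 0\<close> by simp
    qed
  qed
qed

lemma Rp_ev_right: "l \<in> {0<..<1} \<Longrightarrow> eventually (\<lambda>r. l*r \<le> r \<and> {l*r..r} \<subseteq> Rp) (at_right (0::real))"
  unfolding eventually_at_right_field Rp_def
  by (rule exI[of _ 1]) (auto simp: mult_le_cancel_right1 intro: less_le_trans[OF mult_pos_pos])

lemma Rp_ev_top: "l \<in> {0<..<1} \<Longrightarrow> eventually (\<lambda>r. l*r \<le> r \<and> {l*r..r} \<subseteq> Rp) (at_top::real filter)"
  unfolding eventually_at_top_linorder Rp_def
  apply (rule exI[of _ 1])
  apply (auto simp: mult_le_cancel_right1)
  by (smt (verit) mult_pos_pos)

lemma II_ev_right: "l \<in> {0<..<1} \<Longrightarrow> eventually (\<lambda>r. l*r \<le> r \<and> {l*r..r} \<subseteq> II) (at_right (0::real))"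
  unfolding eventually_at_right_field II_def
  by (rule exI[of _ 1]) (auto simp: mult_le_cancel_right1 intro: less_le_trans[OF mult_pos_pos])

lemma SO_Rp_iff:
  "SO_Rp f \<longleftrightarrow> Cb Rp f \<and> (\<forall>l\<in>{0<..<1}. oscsmall f l (at_right 0) \<and> oscsmall f l at_top)"
  unfolding SO_Rp_def Cb_def using tendsto_osc_iff[OF _ Rp_ev_right] tendsto_osc_iff[OF _ Rp_ev_top]
  by blast

lemma bounded_flip: "bounded (f ` II) \<Longrightarrow> bounded ((\<lambda>t. f (1 - t)) ` II)"
proof -
  assume "bounded (f ` II)"
  moreover have "(\<lambda>t. f (1 - t)) ` II \<subseteq> f ` II" by (auto simp: II_def)
  ultimately show ?thesis by (rule bounded_subset)
qed

lemma SO_I_iff: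
  "SO_I f \<longleftrightarrow> Cb II f \<and> (\<forall>l\<in>{0<..<1}. oscsmall f l (at_right 0) \<and> oscsmall (\<lambda>t. f (1 - t)) l (at_right 0))"
  unfolding SO_I_def Cb_def using tendsto_osc_iff[OF _ II_ev_right] tendsto_osc_iff[OF bounded_flip II_ev_right]
  by blast



lemma cnorm: "norm (complex_of_real a - complex_of_real b) = \<bar>a - b\<bar>"
  by (metis norm_of_real of_real_diff)

lemma oscsmall_approx:
  assumes g: "oscsmall g l F" and a: "\<forall>e>0. eventually (\<lambda>r. \<forall>t\<in>{l*r..r}. norm (f t - g t) \<le> e) F"
  shows "oscsmall f l F"
  unfolding oscsmall_def
proof (intro allI impI)
  fix e :: real assume "e > 0"
  then have e3: "e/3 > 0" by simp
  have "eventually (\<lambda>r. \<forall>t\<in>{l*r..r}. \<forall>\<tau>\<in>{l*r..r}. norm (g t - g \<tau>) \<le> e/3) F"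
    using g e3 unfolding oscsmall_def by blast
  moreover have "eventually (\<lambda>r. \<forall>t\<in>{l*r..r}. norm (f t - g t) \<le> e/3) F" using a e3 by blast
  ultimately show "eventually (\<lambda>r. \<forall>t\<in>{l*r..r}. \<forall>\<tau>\<in>{l*r..r}. norm (f t - f \<tau>) \<le> e) F"
  proof eventually_elim
    case (elim r)
    show ?case
    proof (intro ballI)
      fix t \<tau> assume "t \<in> {l*r..r}" "\<tau> \<in> {l*r..r}"
      then have "norm (g t - g \<tau>) \<le> e/3" "norm (f t - g t) \<le> e/3" "norm (f \<tau> - g \<tau>) \<le> e/3"
        using elim by auto
      moreover have "norm (f t - f \<tau>) \<le> norm (f t - g t) + norm (g t - g \<tau>) + norm (f \<tau> - g \<tau>)"
      proof -
        have eq: "f t - f \<tau> = ((f t - g t) + (g t - g \<tau>)) - (f \<tau> - g \<tau>)" by simp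
        show ?thesis unfolding eq
          using norm_triangle_ineq4[of "(f t - g t) + (g t - g \<tau>)" "f \<tau> - g \<tau>"]
            norm_triangle_ineq[of "f t - g t" "g t - g \<tau>"] by linarith
      qed
      ultimately show "norm (f t - f \<tau>) \<le> e" by linarith
    qed
  qed
qed

lemma oscsmall_const: "oscsmall (\<lambda>_. c) l F"
  unfolding oscsmall_def by auto

lemma ptw_top:
  assumes "l > 0" "\<forall>e>0. eventually (\<lambda>t. norm (f t - g t) \<le> e) at_top"
  shows "\<forall>e>0. eventually (\<lambda>r. \<forall>t\<in>{l*r..(r::real)}. norm (f t - g t) \<le> e) at_top"
proof (intro allI impI)
  fix e :: real assume "e > 0"
  then obtain N where N: "\<And>t. t \<ge> N \<Longrightarrow> norm (f t - g t) \<le> e"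
    using assms(2) unfolding eventually_at_top_linorder by blast
  show "eventually (\<lambda>r. \<forall>t\<in>{l*r..(r::real)}. norm (f t - g t) \<le> e) at_top"
    unfolding eventually_at_top_linorder
  proof (intro exI[of _ "N/l"] allI impI ballI)
    fix r t assume "r \<ge> N/l" "t \<in> {l*r..r}"
    then have "l*r \<ge> N" using assms(1) by (simp add: field_simps)
    then show "norm (f t - g t) \<le> e" using N \<open>t \<in> {l*r..r}\<close> by auto
  qed
qed

lemma ptw_right:
  assumes "l > 0" "\<forall>e>0. eventually (\<lambda>t. norm (f t - g t) \<le> e) (at_right 0)"
  shows "\<forall>e>0. eventually (\<lambda>r. \<forall>t\<in>{l*r..(r::real)}. norm (f t - g t) \<le> e) (at_right 0)"
proof (intro allI impI)
  fix e :: real assume "e > 0"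
  then obtain b where b: "b > 0" "\<And>t. 0 < t \<Longrightarrow> t < b \<Longrightarrow> norm (f t - g t) \<le> e"
    using assms(2) unfolding eventually_at_right_field by blast
  show "eventually (\<lambda>r. \<forall>t\<in>{l*r..(r::real)}. norm (f t - g t) \<le> e) (at_right 0)"
    unfolding eventually_at_right_field
  proof (intro exI[of _ b] conjI allI impI ballI)
    fix r t assume "0 < r" "r < b" "t \<in> {l*r..r}"
    moreover have "0 < l*r" using assms(1) \<open>0<r\<close> by simp
    ultimately show "norm (f t - g t) \<le> e" using b by auto
  qed (use b in auto)
qed

lemma oscsmall_comp:
  fixes u h :: "real \<Rightarrow> real"
  assumes o: "oscsmall (\<lambda>t. complex_of_real (u t)) l F" and h: "continuous_on K h" "compact K"
    and ev: "eventually (\<lambda>r. \<forall>t\<in>{l*r..r}. u t \<in> K) F"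
  shows "oscsmall (\<lambda>t. complex_of_real (h (u t))) l F"
  unfolding oscsmall_def
proof (intro allI impI)
  fix e :: real assume "e > 0"
  have "uniformly_continuous_on K h" using compact_uniformly_continuous h by blast
  then obtain d where d: "d > 0" "\<And>x x'. x \<in> K \<Longrightarrow> x' \<in> K \<Longrightarrow> dist x' x < d \<Longrightarrow> dist (h x') (h x) < e"
    unfolding uniformly_continuous_on_def using \<open>e > 0\<close> by metis
  have "eventually (\<lambda>r. \<forall>t\<in>{l*r..r}. \<forall>\<tau>\<in>{l*r..r}. norm (complex_of_real (u t) - complex_of_real (u \<tau>)) \<le> d/2) F"
    using o d(1) unfolding oscsmall_def by (meson half_gt_zero)
  then show "eventually (\<lambda>r. \<forall>t\<in>{l*r..r}. \<forall>\<tau>\<in>{l*r..r}. norm (complex_of_real (h (u t)) - complex_of_real (h (u \<tau>))) \<le> e) F"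
    using ev
  proof eventually_elim
    case (elim r)
    show ?case
    proof (intro ballI)
      fix t \<tau> assume t: "t \<in> {l*r..r}" "\<tau> \<in> {l*r..r}"
      then have "\<bar>u t - u \<tau>\<bar> \<le> d/2" using elim by (simp add: cnorm)
      then have "dist (u t) (u \<tau>) < d" using d(1) by (simp add: dist_real_def)
      then have "dist (h (u t)) (h (u \<tau>)) < e" using d(2) t elim by blast
      then show "norm (complex_of_real (h (u t)) - complex_of_real (h (u \<tau>))) \<le> e"
        by (simp add: cnorm dist_real_def)
    qed
  qed
qed

lemma oscsmall_mult:
  assumes f: "oscsmall f l F" and g: "oscsmall g l F" and B: "B > 0"
    and ev: "eventually (\<lambda>r. \<forall>t\<in>{l*r..r}. norm (f t) \<le> B \<and> norm (g t) \<le> B) F"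
  shows "oscsmall (\<lambda>t. f t * g t) l F"
  unfolding oscsmall_def
proof (intro allI impI)
  fix e :: real assume "e > 0"
  define e' where "e' = e / (2*B)"
  have e': "e' > 0" using \<open>e>0\<close> B by (simp add: e'_def)
  have "eventually (\<lambda>r. \<forall>t\<in>{l*r..r}. \<forall>\<tau>\<in>{l*r..r}. norm (f t - f \<tau>) \<le> e') F"
    using f e' unfolding oscsmall_def by blast
  moreover have "eventually (\<lambda>r. \<forall>t\<in>{l*r..r}. \<forall>\<tau>\<in>{l*r..r}. norm (g t - g \<tau>) \<le> e') F"
    using g e' unfolding oscsmall_def by blast
  ultimately show "eventually (\<lambda>r. \<forall>t\<in>{l*r..r}. \<forall>\<tau>\<in>{l*r..r}. norm (f t * g t - f \<tau> * g \<tau>) \<le> e) F"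
    using ev
  proof eventually_elim
    case (elim r)
    show ?case
    proof (intro ballI)
      fix t \<tau> assume t: "t \<in> {l*r..r}" "\<tau> \<in> {l*r..r}"
      have eq: "f t * g t - f \<tau> * g \<tau> = f t * (g t - g \<tau>) + (f t - f \<tau>) * g \<tau>"
        by (simp add: algebra_simps)
      have "norm (f t * (g t - g \<tau>)) \<le> B * e'"
        unfolding norm_mult using elim t B e' by (intro mult_mono) auto
      moreover have "norm ((f t - f \<tau>) * g \<tau>) \<le> e' * B"
        unfolding norm_mult using elim t B e' by (intro mult_mono) auto
      moreover have "B * e' + e' * B = e" using B by (simp add: e'_def field_simps)
      ultimately show "norm (f t * g t - f \<tau> * g \<tau>) \<le> e"
        unfolding eq by (smt (verit) norm_triangle_ineq)
    qed
  qed
qed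



lemma eta_mono: "0 \<le> u \<Longrightarrow> u \<le> r \<Longrightarrow> r < 1 \<Longrightarrow> eta u \<le> eta r"
  unfolding eta_def by (rule frac_le) auto

lemma eta_ge: "0 \<le> u \<Longrightarrow> u < 1 \<Longrightarrow> u \<le> eta u"
  unfolding eta_def using frac_le[of u u "1-u" 1] by simp

lemma eta_le2: "0 \<le> r \<Longrightarrow> r \<le> 1/2 \<Longrightarrow> eta r \<le> 2*r"
  unfolding eta_def using frac_le[of r r "1/2" "1-r"] by simp

lemma eta_pos: "0 < r \<Longrightarrow> r < 1 \<Longrightarrow> 0 < eta r"
  unfolding eta_def by simp

lemma eta_II: "y \<in> II \<Longrightarrow> eta y \<in> Rp"
  unfolding II_def Rp_def by (simp add: eta_pos)

lemma eta_flip: "eta (1 - u) = (1 - u) / u"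
  unfolding eta_def by simp

lemma cont_eta: "continuous_on II eta"
  unfolding eta_def II_def by (intro continuous_intros) auto

lemma Cb_comp_eta:
  assumes "Cb Rp a" shows "Cb II (a \<circ> eta)"
  unfolding Cb_def
proof
  have "eta ` II \<subseteq> Rp" using eta_II by auto
  then show "continuous_on II (a \<circ> eta)"
    using assms unfolding Cb_def by (meson cont_eta continuous_on_compose continuous_on_subset)
  show "bounded ((a \<circ> eta) ` II)"
    using assms \<open>eta ` II \<subseteq> Rp\<close> unfolding Cb_def by (metis bounded_subset image_comp image_mono)
qed

lemma partA_right:
  assumes l: "l \<in> {0<..<1::real}" and o: "oscsmall a (l/2) (at_right 0)"
  shows "oscsmall (a \<circ> eta) l (at_right 0)"
  unfolding oscsmall_def
proof (intro allI impI)
  fix e :: real assume "e > 0"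
  then obtain b where b: "b > 0" "\<And>s. 0 < s \<Longrightarrow> s < b \<Longrightarrow> \<forall>t\<in>{l/2 * s..s}. \<forall>\<tau>\<in>{l/2 * s..s}. norm (a t - a \<tau>) \<le> e"
    using o unfolding oscsmall_def eventually_at_right_field by blast
  show "eventually (\<lambda>r. \<forall>t\<in>{l*r..r}. \<forall>\<tau>\<in>{l*r..r}. norm ((a \<circ> eta) t - (a \<circ> eta) \<tau>) \<le> e) (at_right 0)"
    unfolding eventually_at_right_field
  proof (intro exI[of _ "min (1/2) (b/2)"] conjI allI impI ballI)
    fix r t \<tau> assume r: "0 < r" "r < min (1/2) (b/2)" and t: "t \<in> {l*r..r}" "\<tau> \<in> {l*r..r}"
    define s where "s = eta r"
    have s: "0 < s" "s < b" using r eta_pos eta_le2[of r] by (auto simp: s_def)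
    have key: "eta x \<in> {l/2 * s..s}" if x: "x \<in> {l*r..r}" for x
    proof -
      have "0 \<le> l*r" using l r by simp
      then have x0: "0 \<le> x" "x < 1" using x r by auto
      have "eta x \<le> s" unfolding s_def using eta_mono x0 x r by auto
      moreover have "l/2 * s \<le> l*r" using eta_le2[of r] r l by (auto simp: s_def)
      then have "l/2 * s \<le> eta x" using eta_ge[OF x0] x by auto
      ultimately show ?thesis by auto
    qed
    show "norm ((a \<circ> eta) t - (a \<circ> eta) \<tau>) \<le> e" using b(2)[OF s] key t by auto
  qed (use b in auto)
qed

lemma partA_left:
  assumes l: "l \<in> {0<..<1::real}" and o: "oscsmall a (l/2) at_top"
  shows "oscsmall (\<lambda>u. (a \<circ> eta) (1 - u)) l (at_right 0)"
  unfolding oscsmall_def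
proof (intro allI impI)
  fix e :: real assume "e > 0"
  then obtain N where N: "\<And>s. s \<ge> N \<Longrightarrow> \<forall>t\<in>{l/2 * s..s}. \<forall>\<tau>\<in>{l/2 * s..s}. norm (a t - a \<tau>) \<le> e"
    using o unfolding oscsmall_def eventually_at_top_linorder by blast
  define N' where "N' = max N 1"
  have N': "N' \<ge> 1" "N' \<ge> N" by (auto simp: N'_def)
  have bpos: "1/(2*l*N') > 0" using l N' by simp
  show "eventually (\<lambda>r. \<forall>t\<in>{l*r..r}. \<forall>\<tau>\<in>{l*r..r}. norm ((a \<circ> eta) (1 - t) - (a \<circ> eta) (1 - \<tau>)) \<le> e) (at_right 0)"
    unfolding eventually_at_right_field
  proof (intro exI[of _ "min (1/2) (1/(2*l*N'))"] conjI allI impI ballI)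
    fix r t \<tau> assume r: "0 < r" "r < min (1/2) (1/(2*l*N'))" and t: "t \<in> {l*r..r}" "\<tau> \<in> {l*r..r}"
    define s where "s = 1/(l*r) - 1"
    have lr: "0 < l*r" "l*r \<le> 1/2" using l r by (auto, smt (verit) mult_le_cancel_right1)
    have "r * (2*l*N') < 1" using r(2) l N' by (simp add: pos_less_divide_eq)
    then have "N' < 1/(2*l*r)" using lr by (simp add: pos_less_divide_eq mult.commute mult.left_commute)
    moreover have "1/(2*l*r) \<le> s"
    proof -
      have "1 \<le> 1/(2*l*r)" using lr by (simp add: pos_le_divide_eq)
      moreover have "1/(l*r) = 2 * (1/(2*l*r))" by simp
      ultimately show ?thesis unfolding s_def by linarith
    qed
    ultimately have sN: "s \<ge> N" using N' by simp
    have key: "(1-x)/x \<in> {l/2 * s..s}" if x: "x \<in> {l*r..r}" for x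
    proof -
      have x0: "0 < x" using x lr by auto
      have fx: "(1-x)/x = 1/x - 1" using x0 by (simp add: diff_divide_distrib)
      have "1/x \<le> 1/(l*r)" using x x0 lr by (intro divide_left_mono) auto
      then have "(1-x)/x \<le> s" unfolding s_def fx by linarith
      moreover have "l/2 * s \<le> (1-x)/x"
      proof -
        have "l/2 * s = 1/(2*r) - l/2" using lr l by (simp add: s_def field_simps)
        also have "\<dots> \<le> 1/r - 1"
        proof -
          have "1/r = 2 * (1/(2*r))" by simp
          moreover have "1 \<le> 1/(2*r)" using r by (simp add: pos_le_divide_eq)
          moreover have "0 < l" using l by auto
          ultimately show ?thesis by linarith
        qed
        also have "\<dots> \<le> 1/x - 1" using x x0 by (simp add: divide_left_mono)
        finally show ?thesis unfolding fx .
      qed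
      ultimately show ?thesis by auto
    qed
    show "norm ((a \<circ> eta) (1 - t) - (a \<circ> eta) (1 - \<tau>)) \<le> e"
      using N[OF sN] key t by (auto simp: eta_flip)
  qed (use bpos in auto)
qed

lemma partA: "SO_Rp a \<Longrightarrow> SO_I (a \<circ> eta)"
  unfolding SO_Rp_iff SO_I_iff
proof (intro conjI ballI)
  assume A: "Cb Rp a \<and> (\<forall>l\<in>{0<..<1}. oscsmall a l (at_right 0) \<and> oscsmall a l at_top)"
  then show "Cb II (a \<circ> eta)" using Cb_comp_eta by blast
  fix l :: real assume l: "l \<in> {0<..<1}"
  then have "l/2 \<in> {0<..<1}" by auto
  then show "oscsmall (a \<circ> eta) l (at_right 0)" "oscsmall (\<lambda>u. (a \<circ> eta) (1 - u)) l (at_right 0)"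
    using A partA_right[OF l] partA_left[OF l] by auto
qed

lemma SO_I_cong:
  assumes "SO_I f" "\<And>y. y \<in> II \<Longrightarrow> f y = g y"
  shows "SO_I g"
proof -
  have c: "Cb II g" using assms unfolding SO_I_def Cb_def
    by (metis continuous_on_cong image_cong)
  have o: "oscsmall g l (at_right 0) \<and> oscsmall (\<lambda>t. g (1 - t)) l (at_right 0)" if l: "l \<in> {0<..<1}" for l
  proof -
    have ev: "eventually (\<lambda>r. \<forall>t\<in>{l*r..r}. t \<in> II \<and> 1 - t \<in> II) (at_right (0::real))"
      using II_ev_right[OF l] by eventually_elim (auto simp: II_def)
    have f: "oscsmall f l (at_right 0)" "oscsmall (\<lambda>t. f (1 - t)) l (at_right 0)"
      using assms(1) l unfolding SO_I_iff by auto
    show ?thesis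
    proof
      show "oscsmall g l (at_right 0)"
        by (rule oscsmall_approx[OF f(1)], intro allI impI, use ev in eventually_elim) (auto simp: assms(2))
      show "oscsmall (\<lambda>t. g (1 - t)) l (at_right 0)"
        by (rule oscsmall_approx[OF f(2)], intro allI impI, use ev in eventually_elim) (auto simp: assms(2))
    qed
  qed
  show ?thesis unfolding SO_I_iff using c o by blast
qed



lemma sos_basic:
  assumes "SOS_Rp \<alpha>"
  shows "bij_betw \<alpha> Rp Rp" "strict_mono_on Rp \<alpha>" "\<And>x. x \<in> Rp \<Longrightarrow> DERIV \<alpha> x :> deriv \<alpha> x"
    "continuous_on Rp (deriv \<alpha>)"
    "\<And>y. y \<in> Rp \<Longrightarrow> DERIV (inv_into Rp \<alpha>) y :> deriv (inv_into Rp \<alpha>) y"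
    "continuous_on Rp (deriv (inv_into Rp \<alpha>))" "\<And>x. x \<in> Rp \<Longrightarrow> \<alpha> x \<noteq> x"
    "bounded ((\<lambda>x. complex_of_real (ln (deriv \<alpha> x))) ` Rp)"
    "SO_Rp (\<lambda>x. complex_of_real (deriv \<alpha> x))"
  using assms unfolding SOS_Rp_def op_diffeo_on_def Cb_def
  by (auto simp: DERIV_deriv_iff_real_differentiable)

lemma Rp_iff[simp]: "x \<in> Rp \<longleftrightarrow> 0 < x" by (simp add: Rp_def)
lemma II_iff[simp]: "x \<in> II \<longleftrightarrow> 0 < x \<and> x < 1" by (simp add: II_def)

lemma sos_in: "SOS_Rp \<alpha> \<Longrightarrow> 0 < x \<Longrightarrow> 0 < \<alpha> x"
  using sos_basic(1) bij_betwE by fastforce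

lemma sos_mono: "SOS_Rp \<alpha> \<Longrightarrow> 0 < y \<Longrightarrow> y < x \<Longrightarrow> \<alpha> y < \<alpha> x"
  using sos_basic(2) by (metis Rp_iff less_trans strict_mono_onD)

lemma sos_deriv_bounds:
  assumes A: "SOS_Rp \<alpha>"
  shows "\<exists>K\<ge>1. \<forall>x>0. 1/K \<le> deriv \<alpha> x \<and> deriv \<alpha> x \<le> K"
proof -
  obtain M0 where M0: "\<forall>y\<in>(\<lambda>x. complex_of_real (ln (deriv \<alpha> x))) ` Rp. norm y \<le> M0"
    using sos_basic(8)[OF A] unfolding bounded_iff by blast
  then have M0': "\<And>x. 0 < x \<Longrightarrow> \<bar>ln (deriv \<alpha> x)\<bar> \<le> M0" by auto
  define M where "M = max M0 0"
  have M1: "\<bar>ln (deriv \<alpha> x)\<bar> \<le> M" if "0 < x" for x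
    using M0'[OF that] by (simp add: M_def le_max_iff_disj)
  have M2: "M \<ge> 0" by (simp add: M_def)
  have lowpos: "exp (-M) \<le> deriv \<alpha> x" if "0 < deriv \<alpha> x" "0 < x" for x
  proof -
    have "-M \<le> ln (deriv \<alpha> x)" using M1[OF that(2)] by linarith
    then have "exp (-M) \<le> exp (ln (deriv \<alpha> x))" by simp
    then show ?thesis using that(1) by simp
  qed
  have oRp: "open Rp" by (simp add: Rp_def)
  have low: "exp (-M) \<le> deriv \<alpha> x" if x: "0 < x" for x
  proof (rule ccontr)
    assume "\<not> exp (-M) \<le> deriv \<alpha> x"
    then have eps: "exp (-M) - deriv \<alpha> x > 0" by simp
    have "x \<in> Rp" using x by simp
    then have "isCont (deriv \<alpha>) x"
      using sos_basic(4)[OF A] continuous_on_eq_continuous_at[OF oRp] by blast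
    then obtain d where d: "d > 0" "\<And>z. dist z x < d \<Longrightarrow> dist (deriv \<alpha> z) (deriv \<alpha> x) < exp (-M) - deriv \<alpha> x"
      using eps unfolding continuous_at_eps_delta by blast
    have "\<exists>z. x < z \<and> z < x + d/2 \<and> \<alpha> (x + d/2) - \<alpha> x = (x + d/2 - x) * deriv \<alpha> z"
      by (rule MVT2) (use d x sos_basic(3)[OF A] in auto)
    then obtain z where z: "x < z" "z < x + d/2" "\<alpha> (x + d/2) - \<alpha> x = (d/2) * deriv \<alpha> z" by auto
    have "\<alpha> x < \<alpha> (x + d/2)" using sos_mono[OF A x] d by simp
    then have "0 < (d/2) * deriv \<alpha> z" using z(3) by simp
    then have "0 < deriv \<alpha> z" using d(1) by (simp add: zero_less_mult_iff)
    then have "exp (-M) \<le> deriv \<alpha> z" using lowpos z x by auto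
    moreover have "dist z x < d" using z d by (simp add: dist_real_def)
    ultimately show False using d(2)[of z] by (simp add: dist_real_def)
  qed
  have up: "deriv \<alpha> x \<le> exp M" if x: "0 < x" for x
  proof -
    have "0 < exp (-M)" by simp
    then have p: "0 < deriv \<alpha> x" using low[OF x] by linarith
    have "ln (deriv \<alpha> x) \<le> M" using M1[OF x] by linarith
    then have "exp (ln (deriv \<alpha> x)) \<le> exp M" by simp
    then show ?thesis using p by simp
  qed
  have "1 / exp M = exp (-M)" by (simp add: exp_minus inverse_eq_divide)
  moreover have "1 \<le> exp M" using M2 by simp
  ultimately show ?thesis using low up by (intro exI[of _ "exp M"]) auto
qed

lemma sos_mvt:
  assumes A: "SOS_Rp \<alpha>" and K: "\<forall>x>0. 1/K \<le> deriv \<alpha> x \<and> deriv \<alpha> x \<le> K" and y: "0 < y" "y < x"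
  shows "\<exists>z. y < z \<and> z < x \<and> \<alpha> x - \<alpha> y = (x - y) * deriv \<alpha> z"
  by (rule MVT2) (use y sos_basic(3)[OF A] in auto)

lemma sos_mvt_bounds:
  assumes A: "SOS_Rp \<alpha>" and K: "\<forall>x>0. 1/K \<le> deriv \<alpha> x \<and> deriv \<alpha> x \<le> K" and y: "0 < y" "y < x"
  shows "(x - y)/K \<le> \<alpha> x - \<alpha> y \<and> \<alpha> x - \<alpha> y \<le> K * (x - y)"
proof -
  obtain z where z: "y < z" "z < x" "\<alpha> x - \<alpha> y = (x - y) * deriv \<alpha> z" using sos_mvt[OF A K y] by blast
  have "1/K \<le> deriv \<alpha> z" "deriv \<alpha> z \<le> K" using K z y by auto
  moreover have "0 < x - y" using y by simp
  ultimately have m: "(x - y) * (1/K) \<le> (x - y) * deriv \<alpha> z" "(x - y) * deriv \<alpha> z \<le> (x - y) * K"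
    by (intro mult_left_mono; simp)+
  then show ?thesis using z(3) by (simp add: mult.commute)
qed

lemma sos_small:
  assumes A: "SOS_Rp \<alpha>" and e: "e > 0"
  shows "\<exists>y0>0. \<forall>y. 0 < y \<longrightarrow> y < y0 \<longrightarrow> \<alpha> y < e"
proof -
  define y0 where "y0 = inv_into Rp \<alpha> e"
  have bi: "bij_betw (inv_into Rp \<alpha>) Rp Rp" using bij_betw_inv_into[OF sos_basic(1)[OF A]] .
  have "y0 \<in> Rp" using bij_betwE[OF bi] e unfolding y0_def by auto
  moreover have "\<alpha> y0 = e" using bij_betw_inv_into_right[OF sos_basic(1)[OF A]] e unfolding y0_def by auto
  ultimately have "0 < y0" "\<alpha> y0 = e" by auto
  then show ?thesis using sos_mono[OF A] by (intro exI[of _ y0]) auto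
qed

lemma sos_lin_bounds:
  assumes A: "SOS_Rp \<alpha>" and K: "\<forall>x>0. 1/K \<le> deriv \<alpha> x \<and> deriv \<alpha> x \<le> K" and K1: "K \<ge> 1" and x: "0 < x"
  shows "x/K \<le> \<alpha> x \<and> \<alpha> x \<le> K * x"
proof
  show "\<alpha> x \<le> K * x"
  proof (rule field_le_epsilon)
    fix e :: real assume "0 < e"
    then obtain y0 where y0: "y0 > 0" "\<And>y. 0 < y \<Longrightarrow> y < y0 \<Longrightarrow> \<alpha> y < e" using sos_small[OF A] by blast
    define y where "y = min (x/2) (y0/2)"
    have y: "0 < y" "y < x" "y < y0" using x y0 by (auto simp: y_def)
    have "\<alpha> x - \<alpha> y \<le> K * (x - y)" using sos_mvt_bounds[OF A K y(1,2)] by blast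
    moreover have "K * (x - y) \<le> K * x" using K1 y by simp
    ultimately show "\<alpha> x \<le> K * x + e" using y0(2)[OF y(1,3)] by linarith
  qed
  show "x/K \<le> \<alpha> x"
  proof (rule field_le_epsilon)
    fix e :: real assume "0 < e"
    define y where "y = min (x/2) (K*e)"
    have y: "0 < y" "y < x" "y \<le> K*e" using x K1 \<open>0<e\<close> by (auto simp: y_def)
    have "(x - y)/K \<le> \<alpha> x - \<alpha> y" using sos_mvt_bounds[OF A K y(1,2)] by blast
    moreover have "0 < \<alpha> y" using sos_in[OF A y(1)] .
    moreover have "(x - y)/K = x/K - y/K" by (simp add: diff_divide_distrib)
    moreover have "y/K \<le> e" using y K1 by (simp add: divide_le_eq mult.commute)
    ultimately show "x/K \<le> \<alpha> x + e" by linarith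
  qed
qed



lemma sos_avg:
  assumes A: "SOS_Rp \<alpha>" and K: "\<forall>x>0. 1/K \<le> deriv \<alpha> x \<and> deriv \<alpha> x \<le> K" and K1: "K \<ge> 1"
  shows "\<forall>e>0. eventually (\<lambda>t. norm (complex_of_real (\<alpha> t / t) - complex_of_real (deriv \<alpha> t)) \<le> e) at_top"
proof (intro allI impI)
  fix e :: real assume e: "e > 0"
  define \<delta> where "\<delta> = min (1/2) (e/(3*K))"
  have d: "0 < \<delta>" "\<delta> < 1" "K * \<delta> \<le> e/3" using e K1
    by (auto simp: \<delta>_def min_def field_simps)
  have "oscsmall (\<lambda>x. complex_of_real (deriv \<alpha> x)) \<delta> at_top"
    using sos_basic(9)[OF A] d unfolding SO_Rp_iff by auto
  then have "eventually (\<lambda>s. \<forall>t\<in>{\<delta>* s..s}. \<forall>\<tau>\<in>{\<delta>* s..s}. norm (complex_of_real (deriv \<alpha> t) - complex_of_real (deriv \<alpha> \<tau>)) \<le> e/3) at_top"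
  proof -
    have "e/3 > 0" using e by simp
    then show ?thesis using \<open>oscsmall _ \<delta> at_top\<close> unfolding oscsmall_def by blast
  qed
  then obtain N where N: "\<And>s. s \<ge> N \<Longrightarrow> \<forall>t\<in>{\<delta>* s..s}. \<forall>\<tau>\<in>{\<delta>* s..s}. \<bar>deriv \<alpha> t - deriv \<alpha> \<tau>\<bar> \<le> e/3"
    unfolding eventually_at_top_linorder cnorm by blast
  show "eventually (\<lambda>t. norm (complex_of_real (\<alpha> t / t) - complex_of_real (deriv \<alpha> t)) \<le> e) at_top"
    unfolding eventually_at_top_linorder cnorm
  proof (intro exI[of _ "max N 1"] allI impI)
    fix t assume t: "t \<ge> max N 1"
    then have t0: "0 < t" "t \<ge> N" by auto
    have dt: "0 < \<delta>*t" "\<delta>*t < t" using d t0 by auto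
    obtain \<xi> where xi: "\<delta>*t < \<xi>" "\<xi> < t" "\<alpha> t - \<alpha> (\<delta>*t) = (t - \<delta>*t) * deriv \<alpha> \<xi>"
      using sos_mvt[OF A K dt] by blast
    have eq: "\<alpha> t / t = \<alpha> (\<delta>*t) / t + (1 - \<delta>) * deriv \<alpha> \<xi>"
    proof -
      have "\<alpha> t = \<alpha> (\<delta>*t) + t * ((1 - \<delta>) * deriv \<alpha> \<xi>)" using xi(3) by (simp add: algebra_simps)
      then show ?thesis using t0 by (simp add: add_divide_distrib)
    qed
    have b1: "0 \<le> \<alpha> (\<delta>*t) / t" using sos_in[OF A dt(1)] t0 by simp
    have "\<alpha> (\<delta>*t) \<le> K * (\<delta>*t)" using sos_lin_bounds[OF A K K1 dt(1)] by blast
    then have b2: "\<alpha> (\<delta>*t) / t \<le> K * \<delta>" using t0 by (simp add: divide_le_eq mult.assoc)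
    have "0 < \<xi>" using xi dt by linarith
    then have kb: "1/K \<le> deriv \<alpha> \<xi> \<and> deriv \<alpha> \<xi> \<le> K" using K by blast
    have "0 < 1/K" using K1 by simp
    then have "0 \<le> deriv \<alpha> \<xi>" "deriv \<alpha> \<xi> \<le> K" using kb by linarith+
    then have b3: "0 \<le> \<delta> * deriv \<alpha> \<xi>" "\<delta> * deriv \<alpha> \<xi> \<le> K * \<delta>" using d
      by (auto simp: mult.commute mult_left_mono)
    have b4: "\<bar>deriv \<alpha> \<xi> - deriv \<alpha> t\<bar> \<le> e/3" using N[OF t0(2)] xi dt by auto
    have "\<alpha> t / t - deriv \<alpha> t = \<alpha> (\<delta>*t) / t - \<delta> * deriv \<alpha> \<xi> + (deriv \<alpha> \<xi> - deriv \<alpha> t)"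
      using eq by (simp add: algebra_simps)
    then show "\<bar>\<alpha> t / t - deriv \<alpha> t\<bar> \<le> e" using b1 b2 b3 b4 d(3) by linarith
  qed
qed

lemma q_bounds:
  assumes A: "SOS_Rp \<alpha>" and K: "\<forall>x>0. 1/K \<le> deriv \<alpha> x \<and> deriv \<alpha> x \<le> K" and K1: "K \<ge> 1" and t: "0 < t"
  shows "1/K \<le> (1+t)/(1 + \<alpha> t) \<and> (1+t)/(1 + \<alpha> t) \<le> K"
proof -
  have lb: "t/K \<le> \<alpha> t" "\<alpha> t \<le> K * t" using sos_lin_bounds[OF A K K1 t] by auto
  have a0: "0 < \<alpha> t" using sos_in[OF A t] .
  have "1 + \<alpha> t \<le> K * (1 + t)" using lb K1 by (simp add: algebra_simps)
  then have "(1+t)/(K*(1+t)) \<le> (1+t)/(1 + \<alpha> t)" using a0 t K1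
    by (intro divide_left_mono) auto
  moreover have "(1+t)/(K*(1+t)) = 1/K" using t by simp
  moreover have "(1+t)/K \<le> 1 + \<alpha> t"
  proof -
    have "1/K \<le> 1" using K1 by simp
    then show ?thesis using lb by (simp add: add_divide_distrib)
  qed
  then have "(1+t)/(1 + \<alpha> t) \<le> (1+t)/((1+t)/K)" using a0 t K1
    by (intro divide_left_mono) auto
  moreover have "(1+t)/((1+t)/K) = K" using t by simp
  ultimately show ?thesis by simp
qed

lemma sos_cont: "SOS_Rp \<alpha> \<Longrightarrow> continuous_on Rp \<alpha>"
  by (rule continuous_at_imp_continuous_on) (use sos_basic(3) DERIV_isCont in blast)


lemma SO_Rp_comp:
  fixes u h :: "real \<Rightarrow> real"
  assumes S: "SO_Rp (\<lambda>t. complex_of_real (u t))" and h: "continuous_on {a..b} h" and u: "\<And>t. 0 < t \<Longrightarrow> u t \<in> {a..b}"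
  shows "SO_Rp (\<lambda>t. complex_of_real (h (u t)))"
  unfolding SO_Rp_iff
proof (intro conjI ballI)
  have cu: "continuous_on Rp u" using S unfolding SO_Rp_def Cb_def by simp
  have "continuous_on Rp (\<lambda>t. h (u t))"
    by (rule continuous_on_compose2[OF h cu]) (use u in auto)
  moreover have "bounded ((\<lambda>t. complex_of_real (h (u t))) ` Rp)"
  proof -
    have "compact (h ` {a..b})" by (rule compact_continuous_image[OF h]) simp
    then obtain B where B: "\<And>y. y \<in> h ` {a..b} \<Longrightarrow> norm y \<le> B" using compact_imp_bounded bounded_iff by metis
    show ?thesis unfolding bounded_iff
      by (rule exI[of _ B]) (use B u in auto)
  qed
  ultimately show "Cb Rp (\<lambda>t. complex_of_real (h (u t)))" unfolding Cb_def by simp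
  fix l :: real assume l: "l \<in> {0<..<1}"
  have o: "oscsmall (\<lambda>t. complex_of_real (u t)) l (at_right 0)" "oscsmall (\<lambda>t. complex_of_real (u t)) l at_top"
    using S l unfolding SO_Rp_iff by auto
  have ev1: "eventually (\<lambda>r. \<forall>t\<in>{l*r..r}. u t \<in> {a..b}) (at_right 0)"
    using Rp_ev_right[OF l] by eventually_elim (use u in auto)
  have ev2: "eventually (\<lambda>r. \<forall>t\<in>{l*r..r}. u t \<in> {a..b}) at_top"
    using Rp_ev_top[OF l] by eventually_elim (use u in auto)
  show "oscsmall (\<lambda>t. complex_of_real (h (u t))) l (at_right 0)"
    by (rule oscsmall_comp[OF o(1) h _ ev1]) simp
  show "oscsmall (\<lambda>t. complex_of_real (h (u t))) l at_top"
    by (rule oscsmall_comp[OF o(2) h _ ev2]) simp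
qed

lemma SO_Rp_mult:
  assumes f: "SO_Rp f" and g: "SO_Rp g" and B: "B > 0" and b: "\<And>t. 0 < t \<Longrightarrow> norm (f t) \<le> B \<and> norm (g t) \<le> B"
  shows "SO_Rp (\<lambda>t. f t * g t)"
  unfolding SO_Rp_iff
proof (intro conjI ballI)
  have "continuous_on Rp (\<lambda>t. f t * g t)"
    using f g unfolding SO_Rp_def Cb_def by (intro continuous_intros) auto
  moreover have "bounded ((\<lambda>t. f t * g t) ` Rp)"
    unfolding bounded_iff
  proof (intro exI[of _ "B*B"] ballI)
    fix y assume "y \<in> (\<lambda>t. f t * g t) ` Rp"
    then obtain t where "0 < t" "y = f t * g t" by auto
    then show "norm y \<le> B*B" using b[of t] B by (auto simp: norm_mult intro!: mult_mono)
  qed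
  ultimately show "Cb Rp (\<lambda>t. f t * g t)" unfolding Cb_def by simp
  fix l :: real assume l: "l \<in> {0<..<1}"
  have ev1: "eventually (\<lambda>r. \<forall>t\<in>{l*r..r}. norm (f t) \<le> B \<and> norm (g t) \<le> B) (at_right 0)"
    using Rp_ev_right[OF l] by eventually_elim (use b in auto)
  have ev2: "eventually (\<lambda>r. \<forall>t\<in>{l*r..r}. norm (f t) \<le> B \<and> norm (g t) \<le> B) at_top"
    using Rp_ev_top[OF l] by eventually_elim (use b in auto)
  show "oscsmall (\<lambda>t. f t * g t) l (at_right 0)"
    using oscsmall_mult[OF _ _ B ev1] f g l unfolding SO_Rp_iff by auto
  show "oscsmall (\<lambda>t. f t * g t) l at_top"
    using oscsmall_mult[OF _ _ B ev2] f g l unfolding SO_Rp_iff by auto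
qed

lemma q_near0:
  assumes A: "SOS_Rp \<alpha>" and K: "\<forall>x>0. 1/K \<le> deriv \<alpha> x \<and> deriv \<alpha> x \<le> K" and K1: "K \<ge> 1"
  shows "\<forall>e>0. eventually (\<lambda>t. norm (complex_of_real ((1+t)/(1 + \<alpha> t)) - complex_of_real 1) \<le> e) (at_right 0)"
proof (intro allI impI)
  fix e :: real assume e: "e > 0"
  show "eventually (\<lambda>t. norm (complex_of_real ((1+t)/(1 + \<alpha> t)) - complex_of_real 1) \<le> e) (at_right 0)"
    unfolding eventually_at_right_field cnorm
  proof (intro exI[of _ "e/(1+K)"] conjI allI impI)
    show "0 < e/(1+K)" using e K1 by simp
    fix t :: real assume t: "0 < t" "t < e/(1+K)"
    have lb: "t/K \<le> \<alpha> t" "\<alpha> t \<le> K * t" using sos_lin_bounds[OF A K K1 t(1)] by auto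
    have a0: "0 < \<alpha> t" using sos_in[OF A t(1)] .
    have eq: "(1+t)/(1 + \<alpha> t) - 1 = (t - \<alpha> t)/(1 + \<alpha> t)" using a0 by (simp add: field_simps)
    have "\<bar>t - \<alpha> t\<bar> / (1 + \<alpha> t) \<le> \<bar>t - \<alpha> t\<bar>" using a0 by (simp add: divide_le_eq mult_le_cancel_left1)
    moreover have "\<bar>t - \<alpha> t\<bar> \<le> (1+K) * t" using lb a0 t by (simp add: algebra_simps abs_le_iff)
    moreover have "(1+K) * t \<le> e" using t K1 by (simp add: less_divide_eq mult.commute)
    ultimately show "\<bar>(1+t)/(1 + \<alpha> t) - 1\<bar> \<le> e" unfolding eq abs_divide using a0 by simp
  qed
qed

lemma q_near_inf:
  assumes A: "SOS_Rp \<alpha>" and K: "\<forall>x>0. 1/K \<le> deriv \<alpha> x \<and> deriv \<alpha> x \<le> K" and K1: "K \<ge> 1"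
  shows "\<forall>e>0. eventually (\<lambda>t. norm (complex_of_real ((1+t)/(1 + \<alpha> t)) - complex_of_real (1 / (\<alpha> t / t))) \<le> e) at_top"
proof (intro allI impI)
  fix e :: real assume e: "e > 0"
  show "eventually (\<lambda>t. norm (complex_of_real ((1+t)/(1 + \<alpha> t)) - complex_of_real (1 / (\<alpha> t / t))) \<le> e) at_top"
    unfolding eventually_at_top_linorder cnorm
  proof (intro exI[of _ "(1+K)*K/e + 1"] allI impI)
    fix t :: real assume t: "(1+K)*K/e + 1 \<le> t"
    have t0: "0 < t" using t e K1 by (smt (verit) divide_nonneg_pos mult_nonneg_nonneg)
    have lb: "t/K \<le> \<alpha> t" "\<alpha> t \<le> K * t" using sos_lin_bounds[OF A K K1 t0] by auto
    have a0: "0 < \<alpha> t" using sos_in[OF A t0] .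
    have eq: "(1+t)/(1 + \<alpha> t) - 1 / (\<alpha> t / t) = (\<alpha> t - t)/((1 + \<alpha> t) * \<alpha> t)"
      using a0 t0 by (simp add: field_simps)
    have tK: "t \<le> K * \<alpha> t" using lb K1 by (simp add: divide_le_eq mult.commute)
    have "\<bar>\<alpha> t - t\<bar> \<le> (1+K) * \<alpha> t" using tK a0 t0 by (simp add: algebra_simps abs_le_iff)
    then have "\<bar>\<alpha> t - t\<bar> / ((1 + \<alpha> t) * \<alpha> t) \<le> (1+K) * \<alpha> t / ((1 + \<alpha> t) * \<alpha> t)"
      using a0 by (intro divide_right_mono) auto
    also have "\<dots> = (1+K) / (1 + \<alpha> t)" using a0 by simp
    also have "\<dots> \<le> (1+K) / \<alpha> t" using a0 K1 by (intro divide_left_mono) auto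
    also have "\<dots> \<le> (1+K) / (t/K)" using a0 K1 lb t0 by (intro divide_left_mono) auto
    also have "\<dots> = (1+K)*K/t" by simp
    also have "\<dots> \<le> e"
    proof -
      have "(1+K)*K/e \<le> t" using t by simp
      then have "(1+K)*K \<le> e * t" using e by (simp add: divide_le_eq mult.commute)
      then show ?thesis using t0 by (simp add: divide_le_eq mult.commute)
    qed
    finally show "\<bar>(1+t)/(1 + \<alpha> t) - 1 / (\<alpha> t / t)\<bar> \<le> e" unfolding eq abs_divide
      using a0 by simp
  qed
qed



lemma r_bounds:
  assumes A: "SOS_Rp \<alpha>" and K: "\<forall>x>0. 1/K \<le> deriv \<alpha> x \<and> deriv \<alpha> x \<le> K" and K1: "K \<ge> 1" and t: "0 < t"
  shows "\<alpha> t / t \<in> {1/K..K}"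
proof -
  have lb: "t/K \<le> \<alpha> t" "\<alpha> t \<le> K * t" using sos_lin_bounds[OF A K K1 t] by auto
  have "1/K \<le> \<alpha> t / t" using lb(1) t by (simp add: le_divide_eq)
  moreover have "\<alpha> t / t \<le> K" using lb(2) t by (simp add: divide_le_eq mult.commute)
  ultimately show ?thesis by simp
qed

lemma q_SO:
  assumes A: "SOS_Rp \<alpha>" and K: "\<forall>x>0. 1/K \<le> deriv \<alpha> x \<and> deriv \<alpha> x \<le> K" and K1: "K \<ge> 1"
  shows "SO_Rp (\<lambda>t. complex_of_real ((1+t)/(1 + \<alpha> t)))"
  unfolding SO_Rp_iff
proof (intro conjI ballI)
  have "continuous_on Rp (\<lambda>t. (1+t)/(1 + \<alpha> t))"
  proof -
    have "\<And>t. t \<in> Rp \<Longrightarrow> 1 + \<alpha> t \<noteq> 0" using sos_in[OF A] by (smt (verit) Rp_iff)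
    then show ?thesis using sos_cont[OF A] by (intro continuous_intros) auto
  qed
  moreover have "bounded ((\<lambda>t. complex_of_real ((1+t)/(1 + \<alpha> t))) ` Rp)"
    unfolding bounded_iff
  proof (intro exI[of _ K] ballI)
    fix y assume "y \<in> (\<lambda>t. complex_of_real ((1+t)/(1 + \<alpha> t))) ` Rp"
    then obtain t where t: "0 < t" "y = complex_of_real ((1+t)/(1 + \<alpha> t))" by auto
    have "0 < (1+t)/(1 + \<alpha> t)" using t sos_in[OF A t(1)] by simp
    then show "norm y \<le> K" using q_bounds[OF A K K1 t(1)] abs_of_pos[OF \<open>0 < (1+t)/(1 + \<alpha> t)\<close>]
      unfolding t(2) norm_of_real by linarith
  qed
  ultimately show "Cb Rp (\<lambda>t. complex_of_real ((1+t)/(1 + \<alpha> t)))" unfolding Cb_def continuous_on_of_real_o_iff by blast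
  fix l :: real assume l: "l \<in> {0<..<1}"
  then have l0: "l > 0" by simp
  show "oscsmall (\<lambda>t. complex_of_real ((1+t)/(1 + \<alpha> t))) l (at_right 0)"
    by (rule oscsmall_approx[OF oscsmall_const[of "complex_of_real 1"]])
       (rule ptw_right[OF l0 q_near0[OF A K K1]])
  have ro: "oscsmall (\<lambda>t. complex_of_real (\<alpha> t / t)) l at_top"
    by (rule oscsmall_approx[of "\<lambda>t. complex_of_real (deriv \<alpha> t)"])
       (use sos_basic(9)[OF A] l ptw_top[OF l0 sos_avg[OF A K K1]] in \<open>auto simp: SO_Rp_iff\<close>)
  have ev: "eventually (\<lambda>r. \<forall>t\<in>{l*r..r}. \<alpha> t / t \<in> {1/K..K}) at_top"
    using Rp_ev_top[OF l] by eventually_elim (use r_bounds[OF A K K1] in auto)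
  have cont: "continuous_on {1/K..K} (\<lambda>v::real. 1/v)"
    using K1 by (intro continuous_intros) auto
  have go: "oscsmall (\<lambda>t. complex_of_real (1 / (\<alpha> t / t))) l at_top"
    using oscsmall_comp[OF ro cont _ ev] by simp
  show "oscsmall (\<lambda>t. complex_of_real ((1+t)/(1 + \<alpha> t))) l at_top"
    by (rule oscsmall_approx[OF go]) (rule ptw_top[OF l0 q_near_inf[OF A K K1]])
qed

lemma G_SO:
  assumes A: "SOS_Rp \<alpha>" and K: "\<forall>x>0. 1/K \<le> deriv \<alpha> x \<and> deriv \<alpha> x \<le> K" and K1: "K \<ge> 1"
  shows "SO_Rp (\<lambda>t. complex_of_real (deriv \<alpha> t * ((1+t)/(1 + \<alpha> t))^2))"
proof -
  have c2: "continuous_on {1/K..K} (\<lambda>v::real. v^2)" by (intro continuous_intros)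
  have qb: "(1+t)/(1 + \<alpha> t) \<in> {1/K..K}" if "0 < t" for t using q_bounds[OF A K K1 that] by simp
  have S2: "SO_Rp (\<lambda>t. complex_of_real (((1+t)/(1 + \<alpha> t))^2))"
    using SO_Rp_comp[OF q_SO[OF A K K1] c2 qb] by simp
  have "SO_Rp (\<lambda>t. complex_of_real (deriv \<alpha> t) * complex_of_real (((1+t)/(1 + \<alpha> t))^2))"
  proof (rule SO_Rp_mult[OF sos_basic(9)[OF A] S2])
    show "0 < K^2" using K1 by simp
    fix t :: real assume t: "0 < t"
    have d: "1/K \<le> deriv \<alpha> t" "deriv \<alpha> t \<le> K" using K t by auto
    have "0 < 1/K" using K1 by simp
    then have "\<bar>deriv \<alpha> t\<bar> \<le> K" using d by linarith
    moreover have "K \<le> K^2" using K1 by (simp add: power2_eq_square)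
    moreover have "((1+t)/(1 + \<alpha> t))^2 \<le> K^2"
    proof -
      have "0 < (1+t)/(1 + \<alpha> t)" using t sos_in[OF A t] by simp
      then show ?thesis using q_bounds[OF A K K1 t] by (intro power_mono) auto
    qed
    ultimately show "norm (complex_of_real (deriv \<alpha> t)) \<le> K^2 \<and> norm (complex_of_real (((1+t)/(1 + \<alpha> t))^2)) \<le> K^2"
      unfolding norm_of_real by simp
  qed
  then show ?thesis by (simp add: of_real_mult)
qed

lemma c_SO:
  assumes A: "SOS_Rp \<alpha>" and K: "\<forall>x>0. 1/K \<le> deriv \<alpha> x \<and> deriv \<alpha> x \<le> K" and K1: "K \<ge> 1"
  shows "SO_Rp (\<lambda>t. complex_of_real (((1+t)/(1 + \<alpha> t)) powr (2/p)))"
proof -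
  have c2: "continuous_on {1/K..K} (\<lambda>v::real. v powr (2/p))"
  proof (intro continuous_intros ballI)
    fix v assume "v \<in> {1/K..K}"
    moreover have "0 < 1/K" using K1 by simp
    ultimately show "v \<noteq> 0" by auto
  qed
  have qb: "(1+t)/(1 + \<alpha> t) \<in> {1/K..K}" if "0 < t" for t using q_bounds[OF A K K1 that] by simp
  show ?thesis using SO_Rp_comp[OF q_SO[OF A K K1] c2 qb] by simp
qed



lemma eta_fun: "eta = (\<lambda>y. y / (1 - y))" by (simp add: fun_eq_iff eta_def)
lemma eta_inv_fun: "eta_inv = (\<lambda>t. t / (1 + t))" by (simp add: fun_eq_iff eta_inv_def)

lemma eta_inv_eta: "y < 1 \<Longrightarrow> eta_inv (eta y) = y"
  unfolding eta_def eta_inv_def by (simp add: field_simps)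

lemma eta_eta_inv: "0 < t \<Longrightarrow> eta (eta_inv t) = t"
  unfolding eta_def eta_inv_def by (simp add: field_simps)

lemma eta_inv_II: "0 < t \<Longrightarrow> eta_inv t \<in> II"
  unfolding eta_inv_def by simp

lemma eta_inv_b: "0 < t \<Longrightarrow> 0 < eta_inv t \<and> eta_inv t < 1"
  using eta_inv_II by simp

lemma eta_bij: "bij_betw eta II Rp"
  by (rule bij_betw_byWitness[where f'=eta_inv]) (auto simp: eta_inv_eta eta_eta_inv eta_pos eta_inv_b)

lemma eta_inv_bij: "bij_betw eta_inv Rp II"
  by (rule bij_betw_byWitness[where f'=eta]) (auto simp: eta_inv_eta eta_eta_inv eta_pos eta_inv_b)

lemma eta_strict: "0 < x \<Longrightarrow> x < y \<Longrightarrow> y < 1 \<Longrightarrow> eta x < eta y"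
  unfolding eta_def by (rule frac_less) auto

lemma eta_inv_strict: "0 < s \<Longrightarrow> s < t \<Longrightarrow> eta_inv s < eta_inv t"
proof -
  assume a: "0 < s" "s < t"
  have "eta_inv s = 1 - 1/(1+s)" "eta_inv t = 1 - 1/(1+t)" using a unfolding eta_inv_def by (simp_all add: field_simps)
  moreover have "1/(1+t) < 1/(1+s)" using a by (simp add: frac_less2)
  ultimately show ?thesis by simp
qed

lemma eta_deriv: "y \<noteq> 1 \<Longrightarrow> (eta has_real_derivative 1/(1-y)^2) (at y)"
  unfolding eta_fun
  by (auto intro!: derivative_eq_intros simp: field_simps power2_eq_square)

lemma eta_inv_deriv: "t \<noteq> -1 \<Longrightarrow> (eta_inv has_real_derivative 1/(1+t)^2) (at t)"
  unfolding eta_inv_fun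
  by (auto intro!: derivative_eq_intros simp: field_simps power2_eq_square)

definition Dc :: "(real \<Rightarrow> real) \<Rightarrow> real \<Rightarrow> real" where
  "Dc f y = 1/(1 + f (eta y))^2 * (deriv f (eta y) * (1/(1-y)^2))"

lemma conj_deriv:
  assumes d: "\<And>x. 0 < x \<Longrightarrow> DERIV f x :> deriv f x" and p: "\<And>x. 0 < x \<Longrightarrow> 0 < f x"
  shows "y \<in> II \<Longrightarrow> DERIV (\<lambda>x. eta_inv (f (eta x))) y :> Dc f y"
proof -
  assume y: "y \<in> II"
  then have e: "0 < eta y" using eta_II by simp
  have i: "DERIV (\<lambda>x. f (eta x)) y :> deriv f (eta y) * (1/(1-y)^2)"
    using DERIV_chain2[OF d[OF e] eta_deriv] y by simp
  have o: "DERIV eta_inv (f (eta y)) :> 1/(1 + f (eta y))^2"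
    using eta_inv_deriv p[OF e] by (smt (verit))
  show ?thesis unfolding Dc_def by (rule DERIV_chain2[OF o i])
qed

lemma conj_deriv_cont:
  assumes d: "\<And>x. 0 < x \<Longrightarrow> DERIV f x :> deriv f x" and p: "\<And>x. 0 < x \<Longrightarrow> 0 < f x"
    and c: "continuous_on Rp (deriv f)"
  shows "continuous_on II (Dc f)"
proof -
  have cf: "continuous_on Rp f"
    using DERIV_isCont[OF d] by (auto intro!: continuous_at_imp_continuous_on)
  have im: "eta ` II \<subseteq> Rp" using eta_II by auto
  have c1: "continuous_on II (\<lambda>y. f (eta y))" by (rule continuous_on_compose2[OF cf cont_eta im])
  have c2: "continuous_on II (\<lambda>y. deriv f (eta y))" by (rule continuous_on_compose2[OF c cont_eta im])
  have nz: "\<forall>y\<in>II. (1 + f (eta y))^2 \<noteq> 0 \<and> (1-y)^2 \<noteq> 0"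
    using p eta_II by (smt (verit) II_iff Rp_iff power_eq_0_iff)
  show ?thesis unfolding Dc_def using c1 c2 nz
    by (intro continuous_intros) auto
qed

lemma Dc_eq:
  assumes y: "y \<in> II" and p: "0 < f (eta y)"
  shows "Dc f y = deriv f (eta y) * ((1 + eta y)/(1 + f (eta y)))^2"
proof -
  have "1/(1-y) = 1 + eta y" using y unfolding eta_def by (simp add: field_simps)
  then have "1/(1-y)^2 = (1 + eta y)^2" by (metis power_one_over)
  then show ?thesis unfolding Dc_def using p by (simp add: power_divide field_simps)
qed



lemma DERIV_diff:
  fixes f :: "real \<Rightarrow> real"
  shows "DERIV f x :> D \<Longrightarrow> f differentiable (at x) \<and> deriv f x = D"
proof -
  assume h: "DERIV f x :> D"
  then have e: "deriv f x = D" by (rule DERIV_imp_deriv)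
  then have "DERIV f x :> deriv f x" using h by simp
  then show ?thesis using e DERIV_deriv_iff_real_differentiable[of f x] by blast
qed

lemma sos_I_part:
  assumes A: "SOS_Rp \<alpha>" and K: "\<forall>x>0. 1/K \<le> deriv \<alpha> x \<and> deriv \<alpha> x \<le> K" and K1: "K \<ge> 1"
    and at: "\<alpha>t = eta_inv \<circ> \<alpha> \<circ> eta"
  shows "SOS_I \<alpha>t"
proof -
  have atf: "\<alpha>t = (\<lambda>x. eta_inv (\<alpha> (eta x)))" using at by (simp add: o_def)
  have apos: "\<And>x. 0 < x \<Longrightarrow> 0 < \<alpha> x" using sos_in[OF A] .
  have ad: "\<And>x. 0 < x \<Longrightarrow> DERIV \<alpha> x :> deriv \<alpha> x" using sos_basic(3)[OF A] by simp
  have bij: "bij_betw \<alpha>t II II" unfolding at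
    by (rule bij_betw_trans[OF eta_bij bij_betw_trans[OF sos_basic(1)[OF A] eta_inv_bij]])
  have smono: "strict_mono_on II \<alpha>t"
  proof (rule strict_mono_onI)
    fix x y assume "x \<in> II" "y \<in> II" "x < y"
    then have "eta x < eta y" "0 < eta x" using eta_strict eta_II by auto
    then have "\<alpha> (eta x) < \<alpha> (eta y)" "0 < \<alpha> (eta x)" using sos_mono[OF A] apos by auto
    then show "\<alpha>t x < \<alpha>t y" unfolding atf using eta_inv_strict by auto
  qed
  have dat: "\<And>y. y \<in> II \<Longrightarrow> DERIV \<alpha>t y :> Dc \<alpha> y" unfolding atf using conj_deriv[OF ad apos] by blast
  have diff1: "\<forall>x\<in>II. \<alpha>t differentiable (at x)" using dat DERIV_diff by blast
  have deq: "\<And>y. y \<in> II \<Longrightarrow> deriv \<alpha>t y = Dc \<alpha> y" using dat DERIV_diff by blast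
  have cont1: "continuous_on II (deriv \<alpha>t)"
    by (rule continuous_on_eq[OF conj_deriv_cont[OF ad apos sos_basic(4)[OF A]]]) (simp_all add: deq)
  define \<beta> where "\<beta> = inv_into Rp \<alpha>"
  have bbij: "bij_betw \<beta> Rp Rp" unfolding \<beta>_def using bij_betw_inv_into[OF sos_basic(1)[OF A]] .
  have bpos: "\<And>x. 0 < x \<Longrightarrow> 0 < \<beta> x" using bij_betwE[OF bbij] by auto
  have ab: "\<And>x. 0 < x \<Longrightarrow> \<alpha> (\<beta> x) = x" unfolding \<beta>_def
    using bij_betw_inv_into_right[OF sos_basic(1)[OF A]] by auto
  have bd: "\<And>x. 0 < x \<Longrightarrow> DERIV \<beta> x :> deriv \<beta> x" unfolding \<beta>_def using sos_basic(5)[OF A] by simp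
  have inv_eq: "inv_into II \<alpha>t y = eta_inv (\<beta> (eta y))" if y: "y \<in> II" for y
  proof (rule inv_into_f_eq[OF bij_betw_imp_inj_on[OF bij]])
    have e: "0 < eta y" using eta_II y by simp
    then show "eta_inv (\<beta> (eta y)) \<in> II" using eta_inv_II bpos by blast
    show "\<alpha>t (eta_inv (\<beta> (eta y))) = y" unfolding atf
      using e bpos ab eta_eta_inv eta_inv_eta y by simp
  qed
  have dinv: "DERIV (inv_into II \<alpha>t) y :> Dc \<beta> y" if y: "y \<in> II" for y
  proof (rule has_field_derivative_transform_within_open[OF conj_deriv[OF bd bpos y] _ y])
    show "open II" by (simp add: II_def)
    show "\<And>x. x \<in> II \<Longrightarrow> eta_inv (\<beta> (eta x)) = inv_into II \<alpha>t x" using inv_eq by simp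
  qed
  have diff2: "\<forall>y\<in>II. inv_into II \<alpha>t differentiable (at y)" using dinv DERIV_diff by blast
  have deq2: "\<And>y. y \<in> II \<Longrightarrow> deriv (inv_into II \<alpha>t) y = Dc \<beta> y" using dinv DERIV_diff by blast
  have cb2: "continuous_on Rp (deriv \<beta>)" unfolding \<beta>_def using sos_basic(6)[OF A] .
  have cont2: "continuous_on II (deriv (inv_into II \<alpha>t))"
    by (rule continuous_on_eq[OF conj_deriv_cont[OF bd bpos cb2]]) (simp_all add: deq2)
  have nofix: "\<forall>x\<in>II. \<alpha>t x \<noteq> x"
  proof
    fix x assume x: "x \<in> II"
    have e: "0 < eta x" using eta_II x by simp
    show "\<alpha>t x \<noteq> x"
    proof
      assume "\<alpha>t x = x"
      then have "eta (\<alpha>t x) = eta x" by simp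
      moreover have "eta (\<alpha>t x) = \<alpha> (eta x)" unfolding atf using apos[OF e] eta_eta_inv by simp
      ultimately show False using sos_basic(7)[OF A] e by simp
    qed
  qed
  have dform: "deriv \<alpha>t y = deriv \<alpha> (eta y) * ((1 + eta y)/(1 + \<alpha> (eta y)))^2" if y: "y \<in> II" for y
    using deq[OF y] Dc_eq[OF y] apos eta_II y by simp
  have dbnd: "1/K^3 \<le> deriv \<alpha>t y \<and> deriv \<alpha>t y \<le> K^3" if y: "y \<in> II" for y
  proof -
    define t where "t = eta y"
    have t: "0 < t" using eta_II y by (simp add: t_def)
    define q where "q = (1+t)/(1 + \<alpha> t)"
    have q: "1/K \<le> q" "q \<le> K" using q_bounds[OF A K K1 t] by (auto simp: q_def)
    have d: "1/K \<le> deriv \<alpha> t" "deriv \<alpha> t \<le> K" using K t by auto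
    have k0: "0 < 1/K" using K1 by simp
    have d0: "0 \<le> deriv \<alpha> t" "0 \<le> q" using d q k0 by linarith+
    have "(1/K) * (1/K)^2 \<le> deriv \<alpha> t * q^2"
      using d q k0 d0 by (intro mult_mono power_mono) auto
    moreover have "deriv \<alpha> t * q^2 \<le> K * K^2"
      using d q k0 d0 by (intro mult_mono power_mono) auto
    moreover have "(1/K) * (1/K)^2 = 1/K^3" "K * K^2 = K^3" by (simp_all add: power3_eq_cube power2_eq_square)
    ultimately show ?thesis using dform[OF y] by (simp add: t_def q_def)
  qed
  have cb: "Cb II (\<lambda>x. complex_of_real (ln (deriv \<alpha>t x)))"
    unfolding Cb_def continuous_on_of_real_o_iff
  proof
    have "\<forall>x\<in>II. deriv \<alpha>t x \<noteq> 0"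
    proof
      fix x assume "x \<in> II"
      moreover have "0 < 1/K^3" using K1 by simp
      ultimately show "deriv \<alpha>t x \<noteq> 0" using dbnd by force
    qed
    then show "continuous_on II (\<lambda>x. ln (deriv \<alpha>t x))" using cont1 by (intro continuous_intros)
    show "bounded ((\<lambda>x. complex_of_real (ln (deriv \<alpha>t x))) ` II)" unfolding bounded_iff
    proof (intro exI[of _ "ln (K^3)"] ballI)
      fix z assume "z \<in> (\<lambda>x. complex_of_real (ln (deriv \<alpha>t x))) ` II"
      then obtain x where x: "x \<in> II" "z = complex_of_real (ln (deriv \<alpha>t x))" by auto
      have k: "0 < 1/K^3" "0 < K^3" using K1 by simp_all
      have dp: "0 < deriv \<alpha>t x" using dbnd[OF x(1)] k(1) by linarith
      have "ln (deriv \<alpha>t x) \<le> ln (K^3)" using dbnd[OF x(1)] k dp by (subst ln_le_cancel_iff) auto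
      moreover have "ln (1/K^3) \<le> ln (deriv \<alpha>t x)" using dbnd[OF x(1)] k dp by (subst ln_le_cancel_iff) auto
      moreover have "ln (1/K^3) = - ln (K^3)" using k by (simp add: ln_div)
      ultimately show "norm z \<le> ln (K^3)" unfolding x(2) norm_of_real by linarith
    qed
  qed
  have so: "SO_I (\<lambda>x. complex_of_real (deriv \<alpha>t x))"
    by (rule SO_I_cong[OF partA[OF G_SO[OF A K K1]]]) (simp add: dform)
  show ?thesis unfolding SOS_I_def op_diffeo_on_def
    using bij smono diff1 cont1 diff2 cont2 nofix cb so by blast
qed

lemma c_part:
  assumes A: "SOS_Rp \<alpha>" and K: "\<forall>x>0. 1/K \<le> deriv \<alpha> x \<and> deriv \<alpha> x \<le> K" and K1: "K \<ge> 1"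
    and at: "\<alpha>t = eta_inv \<circ> \<alpha> \<circ> eta" and p: "0 < p"
    and c: "c = (\<lambda>y. ((1 - \<alpha>t y) / (1 - y)) powr (2 / p))"
  shows "SO_I (\<lambda>y. complex_of_real (c y)) \<and> bdd_below (c ` II) \<and> bdd_above (c ` II) \<and>
         0 < (INF y\<in>II. c y) \<and> (INF y\<in>II. c y) \<le> (SUP y\<in>II. c y)"
proof -
  have ceq: "c y = ((1 + eta y)/(1 + \<alpha> (eta y))) powr (2/p)" if y: "y \<in> II" for y
  proof -
    define t where "t = eta y"
    have t: "0 < t" using eta_II y by (simp add: t_def)
    have a: "0 < \<alpha> t" using sos_in[OF A t] .
    have yt: "y = t/(1+t)" using eta_inv_eta[of y] y by (simp add: t_def eta_inv_def)
    have "\<alpha>t y = \<alpha> t / (1 + \<alpha> t)" by (simp add: at eta_inv_def t_def)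
    then have h1: "1 - \<alpha>t y = 1/(1 + \<alpha> t)" using a by (simp add: field_simps)
    have h2: "1 - y = 1/(1+t)" using yt t by (simp add: field_simps)
    have "(1 - \<alpha>t y) / (1 - y) = (1 + t)/(1 + \<alpha> t)" unfolding h1 h2 by simp
    then show ?thesis unfolding c t_def by simp
  qed
  have so: "SO_I (\<lambda>y. complex_of_real (c y))"
    by (rule SO_I_cong[OF partA[OF c_SO[OF A K K1, of p]]]) (simp add: ceq)
  have cb: "(1/K) powr (2/p) \<le> c y \<and> c y \<le> K powr (2/p)" if y: "y \<in> II" for y
  proof -
    have t: "0 < eta y" using eta_II y by simp
    have k0: "0 < 1/K" using K1 by simp
    have qb: "1/K \<le> (1 + eta y)/(1 + \<alpha> (eta y))" "(1 + eta y)/(1 + \<alpha> (eta y)) \<le> K"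
      using q_bounds[OF A K K1 t] by auto
    have q0: "0 \<le> (1 + eta y)/(1 + \<alpha> (eta y))" using k0 qb by linarith
    have e0: "0 \<le> 2/p" using p by simp
    have l1: "(1/K) powr (2/p) \<le> ((1 + eta y)/(1 + \<alpha> (eta y))) powr (2/p)"
      by (rule powr_mono2[OF e0 _ qb(1)]) (use k0 in linarith)
    have l2: "((1 + eta y)/(1 + \<alpha> (eta y))) powr (2/p) \<le> K powr (2/p)"
      by (rule powr_mono2[OF e0 q0 qb(2)])
    show ?thesis unfolding ceq[OF y] using l1 l2 by blast
  qed
  have bb: "bdd_below (c ` II)" by (rule bdd_belowI2[where m="(1/K) powr (2/p)"]) (use cb in blast)
  have ba: "bdd_above (c ` II)" by (rule bdd_aboveI2[where M="K powr (2/p)"]) (use cb in blast)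
  have h: "(1/2::real) \<in> II" by simp
  then have ne: "II \<noteq> {}" by (metis empty_iff)
  have "(1/K) powr (2/p) \<le> (INF y\<in>II. c y)" by (rule cINF_greatest[OF ne]) (use cb in blast)
  moreover have "0 < (1/K) powr (2/p)" using K1 by simp
  moreover have "(INF y\<in>II. c y) \<le> (SUP y\<in>II. c y)"
  proof -
    have "(INF y\<in>II. c y) \<le> c (1/2)" by (rule cINF_lower[OF bb h])
    also have "\<dots> \<le> (SUP y\<in>II. c y)" by (rule cSUP_upper[OF h ba])
    finally show ?thesis .
  qed
  ultimately show ?thesis using so bb ba by linarith
qed

theorem lemma3p3:
  fixes p :: real
  assumes "1 < p"
  shows "(\<forall>a. SO_Rp a \<longrightarrow> SO_I (a \<circ> eta)) \<and>
         (\<forall>\<alpha>. SOS_Rp \<alpha> \<longrightarrow>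
            (let \<alpha>t = eta_inv \<circ> \<alpha> \<circ> eta;
                 c = (\<lambda>y. ((1 - \<alpha>t y) / (1 - y)) powr (2 / p))
             in SOS_I \<alpha>t \<and> SO_I (\<lambda>y. complex_of_real (c y)) \<and>
                bdd_below (c ` II) \<and> bdd_above (c ` II) \<and>
                0 < (INF y\<in>II. c y) \<and> (INF y\<in>II. c y) \<le> (SUP y\<in>II. c y)))"
proof (intro conjI allI impI)
  fix a assume "SO_Rp a" then show "SO_I (a \<circ> eta)" by (rule partA)
next
  fix \<alpha> assume A: "SOS_Rp \<alpha>"
  obtain K where K1: "K \<ge> 1" and K: "\<forall>x>0. 1/K \<le> deriv \<alpha> x \<and> deriv \<alpha> x \<le> K"
    using sos_deriv_bounds[OF A] by blast
  have p: "0 < p" using assms by simp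
  show "let \<alpha>t = eta_inv \<circ> \<alpha> \<circ> eta;
                 c = (\<lambda>y. ((1 - \<alpha>t y) / (1 - y)) powr (2 / p))
             in SOS_I \<alpha>t \<and> SO_I (\<lambda>y. complex_of_real (c y)) \<and>
                bdd_below (c ` II) \<and> bdd_above (c ` II) \<and>
                0 < (INF y\<in>II. c y) \<and> (INF y\<in>II. c y) \<le> (SUP y\<in>II. c y)"
    unfolding Let_def
    using sos_I_part[OF A K K1 refl] c_part[OF A K K1 refl p refl] by blast
qed


end
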